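(* Let $G_1$ and $G_2$ be two vertex-disjoint 2-edge-colored graphs with Hamiltonian alternating cycles $C_1=x_0x_1\cdots x_{2n-1}x_0$ and $C_2=y_0y_1\cdots y_{2m-1}y_0$, respectively, and let $G\in G_1\oplus G_2$. Suppose there is no good pair in $G$ (between $C_1$ and $C_2$), and that for each $i\in\{1,2\}$ there is a vertex of $C_i$ which is non-singular with respect to $C_{3-i}$. Then $G$ is vertex alternating-pancyclic.
   Context: All graphs are simple, with edges colored red or blue. An alternating cycle is a cycle in which consecutive edges have different colors; a Hamiltonian alternating cycle of a graph is an alternating cycle through all its vertices. A 2-edge-colored graph of order $2N$ is vertex alternating-pancyclic if for every vertex $v$ and every $k\in\{2,\dots,N\}$ it contains an alternating cycle of length $2k$ through $v$. For vertex-disjoint 2-edge-colored graphs $G_1,G_2$, the colored generalized sum $G_1\oplus G_2$ is the set of 2-edge-colored graphs $G$ with $V(G)=V(G_1)\cup V(G_2)$, $G\langle V(G_i)\rangle=G_i$ with the same coloring, and exactly one edge (of arbitrary fixed color) between each $u\in V(G_1)$ and $w\in V(G_2)$; these latter edges are the exterior edges. For $v$ on an alternating cycle $C$, $v^r$ (resp. $v^b$) is the neighbor of $v$ on $C$ with $vv^r$ red (resp. $vv^b$ blue). For an exterior edge $vw$ with $v\in V(C_1)$, $w\in V(C_2)$: if $vw$ is red, $vw,v^rw^r$ is a good pair if $v^rw^r$ is red; if $vw$ is blue, $vw,v^bw^b$ is a good pair if $v^bw^b$ is blue. A vertex $v\in V(C_i)$ is singular with respect to $C_{3-i}$ if all edges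 between $v$ and $V(C_{3-i})$ have the same color, and non-singular otherwise. *)

theory Defs
  imports Main
begin

datatype color = Red | Blue

text \<open>A 2-edge-coloured simple graph: vertex set, edge set (2-element subsets),
  and a colouring of the edges (the value of col outside the edges is irrelevant).\<close>
record 'a cgraph =
  verts :: "'a set"
  edges :: "'a set set"
  col :: "'a set \<Rightarrow> color"

definition cgraph :: "'a cgraph \<Rightarrow> bool" where
  "cgraph G \<longleftrightarrow> finite (verts G) \<and>
     (\<forall>e\<in>edges G. \<exists>u v. u \<noteq> v \<and> u \<in> verts G \<and> v \<in> verts G \<and> e = {u, v})"

definition cyc_edge :: "'a list \<Rightarrow> nat \<Rightarrow> 'a set" where
  "cyc_edge vs i = {vs ! i, vs ! ((i + 1) mod length vs)}"

definition alt_cycle :: "'a cgraph \<Rightarrow> 'a list \<Rightarrow> bool" where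
  "alt_cycle G vs \<longleftrightarrow> length vs \<ge> 3 \<and> distinct vs \<and> set vs \<subseteq> verts G \<and>
     (\<forall>i < length vs. cyc_edge vs i \<in> edges G) \<and>
     (\<forall>i < length vs. col G (cyc_edge vs i) \<noteq> col G (cyc_edge vs ((i + 1) mod length vs)))"

definition ham_alt_cycle :: "'a cgraph \<Rightarrow> 'a list \<Rightarrow> bool" where
  "ham_alt_cycle G vs \<longleftrightarrow> alt_cycle G vs \<and> set vs = verts G"

definition vertex_alt_pancyclic :: "'a cgraph \<Rightarrow> bool" where
  "vertex_alt_pancyclic G \<longleftrightarrow> (\<exists>N. card (verts G) = 2 * N \<and>
     (\<forall>v\<in>verts G. \<forall>k. 2 \<le> k \<and> k \<le> N \<longrightarrow>
        (\<exists>vs. alt_cycle G vs \<and> length vs = 2 * k \<and> v \<in> set vs)))"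

definition in_gsum :: "'a cgraph \<Rightarrow> 'a cgraph \<Rightarrow> 'a cgraph \<Rightarrow> bool" where
  "in_gsum G G1 G2 \<longleftrightarrow> cgraph G \<and> verts G1 \<inter> verts G2 = {} \<and>
     verts G = verts G1 \<union> verts G2 \<and>
     {e \<in> edges G. e \<subseteq> verts G1} = edges G1 \<and>
     {e \<in> edges G. e \<subseteq> verts G2} = edges G2 \<and>
     (\<forall>e\<in>edges G1. col G e = col G1 e) \<and>
     (\<forall>e\<in>edges G2. col G e = col G2 e) \<and>
     (\<forall>u\<in>verts G1. \<forall>w\<in>verts G2. {u, w} \<in> edges G)"

definition cyc_nbr :: "'a cgraph \<Rightarrow> 'a list \<Rightarrow> 'a \<Rightarrow> color \<Rightarrow> 'a \<Rightarrow> bool" where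
  "cyc_nbr G vs v c u \<longleftrightarrow> (\<exists>i < length vs. vs ! i = v \<and>
     (u = vs ! ((i + 1) mod length vs) \<or> u = vs ! ((i + length vs - 1) mod length vs)) \<and>
     col G {v, u} = c)"

definition has_good_pair :: "'a cgraph \<Rightarrow> 'a list \<Rightarrow> 'a list \<Rightarrow> bool" where
  "has_good_pair G xs ys \<longleftrightarrow> (\<exists>v\<in>set xs. \<exists>w\<in>set ys. \<exists>c v' w'.
     col G {v, w} = c \<and> cyc_nbr G xs v c v' \<and> cyc_nbr G ys w c w' \<and>
     {v', w'} \<in> edges G \<and> col G {v', w'} = c)"

definition non_singular :: "'a cgraph \<Rightarrow> 'a \<Rightarrow> 'a list \<Rightarrow> bool" where
  "non_singular G v ys \<longleftrightarrow>
     (\<exists>w1\<in>set ys. \<exists>w2\<in>set ys. col G {v, w1} \<noteq> col G {v, w2})"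

end

theory Submission
  imports Defs
begin

lemma successively_nth:
  "successively P xs \<longleftrightarrow> (\<forall>i. Suc i < length xs \<longrightarrow> P (xs!i) (xs!Suc i))"
proof (induction P xs rule: successively.induct)
  case (3 P x y xs)
  show ?case
  proof
    assume "successively P (x # y # xs)"
    then show "\<forall>i. Suc i < length (x # y # xs) \<longrightarrow> P ((x # y # xs) ! i) ((x # y # xs) ! Suc i)"
      using 3 by (auto simp: less_Suc_eq_0_disj)
  next
    assume H: "\<forall>i. Suc i < length (x # y # xs) \<longrightarrow> P ((x # y # xs) ! i) ((x # y # xs) ! Suc i)"
    have "P x y" using H[rule_format, of 0] by simp
    moreover have "successively P (y#xs)" using 3 H[rule_format, of "Suc _"] by auto
    ultimately show "successively P (x # y # xs)" by simp
  qed
qed auto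


definition ecols :: "'a cgraph \<Rightarrow> 'a list \<Rightarrow> color list" where
  "ecols G vs = map (\<lambda>(u,v). col G {u,v}) (zip vs (tl vs))"

lemma ecols_single[simp]: "ecols G [x] = []"
  by (simp add: ecols_def)

lemma ecols_append:
  "u \<noteq> [] \<Longrightarrow> v \<noteq> [] \<Longrightarrow> ecols G (u @ v) = ecols G u @ col G {last u, hd v} # ecols G v"
proof (induction u rule: list_nonempty_induct)
  case (single x) then show ?case by (cases v) (auto simp: ecols_def)
next
  case (cons x xs) then show ?case by (cases xs) (auto simp: ecols_def)
qed

lemma length_ecols[simp]: "length (ecols G vs) = length vs - 1"
  by (simp add: ecols_def)

lemma nth_ecols: "Suc i < length vs \<Longrightarrow> ecols G vs ! i = col G {vs!i, vs!Suc i}"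
  by (simp add: ecols_def nth_tl)

lemma mk_alt_cycle:
  assumes L: "length vs \<ge> 3" and d: "distinct vs" and s: "set vs \<subseteq> verts G"
    and E: "successively (\<lambda>u v. {u,v} \<in> edges G) (vs @ [hd vs])"
    and C: "successively (\<noteq>) (ecols G (vs @ [hd vs]))"
    and HL: "hd (ecols G (vs @ [hd vs])) \<noteq> last (ecols G (vs @ [hd vs]))"
  shows "alt_cycle G vs"
proof -
  let ?L = "length vs"
  let ?w = "vs @ [hd vs]"
  have w: "?w ! i = vs ! (i mod ?L)" if "i \<le> ?L" for i
  proof (cases "i = ?L")
    case True then show ?thesis using L by (cases vs) (auto simp: nth_append)
  next
    case False then show ?thesis using that by (simp add: nth_append)
  qed
  have ce: "cyc_edge vs i = {?w ! i, ?w ! Suc i}" if "i < ?L" for i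
    using that w[of i] w[of "Suc i"] by (simp add: cyc_edge_def)
  have ec: "ecols G ?w ! i = col G (cyc_edge vs i)" if "i < ?L" for i
    using that ce[OF that] by (simp add: nth_ecols)
  have e: "cyc_edge vs i \<in> edges G" if "i < ?L" for i
    using E that ce[OF that] by (simp add: successively_nth)
  have a: "col G (cyc_edge vs i) \<noteq> col G (cyc_edge vs ((i + 1) mod ?L))" if "i < ?L" for i
  proof (cases "Suc i < ?L")
    case True
    then show ?thesis using C ec[OF that] ec[OF True] by (simp add: successively_nth) metis
  next
    case False
    then have i: "i = ?L - 1" using that by simp
    have ne: "ecols G ?w \<noteq> []" using L by (metis length_ecols length_append_singleton diff_Suc_1 list.size(3) not_numeral_le_zero)
    have "hd (ecols G ?w) = ecols G ?w ! 0" using ne by (simp add: hd_conv_nth)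
    moreover have "last (ecols G ?w) = ecols G ?w ! (?L - 1)" using ne by (simp add: last_conv_nth)
    moreover have "(i + 1) mod ?L = 0" proof - have "i + 1 = ?L" using i L by simp then show ?thesis by simp qed
    moreover have "vs \<noteq> []" using L by auto
    ultimately show ?thesis using HL ec[of 0] ec[of "?L - 1"] i L
      by (metis diff_less zero_less_one less_le_trans zero_less_numeral)
  qed
  show ?thesis unfolding alt_cycle_def using L d s e a by auto
qed


definition Fc :: "int \<Rightarrow> color" where "Fc i = (if even i then Red else Blue)"

lemma Fc_Suc: "Fc (i + 1) \<noteq> Fc i" by (simp add: Fc_def)
lemma Fc_per2: "Fc (i + 2) = Fc i" by (simp add: Fc_def)
lemma Fc_neq_iff: "Fc i \<noteq> Fc j \<longleftrightarrow> odd (i + j)" by (auto simp: Fc_def)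

definition calt :: "'a cgraph \<Rightarrow> (int \<Rightarrow> 'a) \<Rightarrow> int \<Rightarrow> bool" where
  "calt G Z L \<longleftrightarrow> L > 0 \<and> (\<forall>i j. Z i = Z j \<longleftrightarrow> i mod L = j mod L) \<and>
     (\<forall>i. {Z i, Z (i+1)} \<in> edges G) \<and> (\<forall>i. col G {Z i, Z (i+1)} = Fc i)"

definition seg :: "(int \<Rightarrow> 'a) \<Rightarrow> int \<Rightarrow> nat \<Rightarrow> 'a list" where
  "seg Z a l = map (\<lambda>t. Z (a + int t)) [0..<Suc l]"

lemma seg_ne[simp]: "seg Z a l \<noteq> []" by (simp add: seg_def)
lemma hd_seg[simp]: "hd (seg Z a l) = Z a" by (simp add: seg_def hd_map del: upt_Suc)
lemma last_seg[simp]: "last (seg Z a l) = Z (a + int l)" by (simp add: seg_def last_map)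
lemma length_seg[simp]: "length (seg Z a l) = Suc l" by (simp add: seg_def)
lemma nth_seg: "t \<le> l \<Longrightarrow> seg Z a l ! t = Z (a + int t)"
  by (simp add: seg_def nth_map del: upt_Suc)
lemma set_seg: "set (seg Z a l) = (\<lambda>t. Z (a + int t)) ` {0..l}"
  by (auto simp: seg_def atLeastLessThanSuc_atLeastAtMost simp del: upt_Suc)

lemma seg_append: "seg Z a p @ seg Z (a + int p + 1) q = seg Z a (p + q + 1)"
proof (rule nth_equalityI)
  show "length (seg Z a p @ seg Z (a + int p + 1) q) = length (seg Z a (p + q + 1))" by simp
  fix i assume "i < length (seg Z a p @ seg Z (a + int p + 1) q)"
  then show "(seg Z a p @ seg Z (a + int p + 1) q) ! i = seg Z a (p + q + 1) ! i"
    by (auto simp: nth_append nth_seg add.assoc)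
qed

lemma seg_edges:
  assumes "\<forall>i. {Z i, Z (i+1)} \<in> edges G"
  shows "successively (\<lambda>u v. {u,v} \<in> edges G) (seg Z a l)"
proof -
  have "{Z (a + int i), Z (a + int (Suc i))} \<in> edges G" for i
    using assms[rule_format, of "a + int i"] by (simp add: add_ac)
  then show ?thesis by (auto simp: successively_nth nth_seg simp del: of_nat_Suc)
qed

lemma ecols_seg: "ecols G (seg Z a l) = map (\<lambda>t. col G {Z (a + int t), Z (a + int t + 1)}) [0..<l]"
  by (rule nth_equalityI) (auto simp: nth_ecols nth_seg add_ac)

lemma seg_alt:
  assumes "\<forall>i. col G {Z i, Z (i+1)} = Fc i"
  shows "successively (\<noteq>) (ecols G (seg Z a l))"
proof -
  have "col G {Z (a + int i), Z (a + int i + 1)} \<noteq> col G {Z (a + int (Suc i)), Z (a + int (Suc i) + 1)}" for i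
    using assms[rule_format, of "a + int i"] assms[rule_format, of "a + int i + 1"]
    by (simp add: Fc_def add_ac)
  then show ?thesis by (auto simp: successively_nth ecols_seg simp del: of_nat_Suc)
qed

lemma hd_ecols_seg:
  assumes "\<forall>i. col G {Z i, Z (i+1)} = Fc i" "l > 0"
  shows "hd (ecols G (seg Z a l)) = Fc a"
  using assms by (simp add: ecols_seg hd_map)

lemma last_ecols_seg:
  assumes "\<forall>i. col G {Z i, Z (i+1)} = Fc i" "l > 0"
  shows "last (ecols G (seg Z a l)) = Fc (a + int l - 1)"
  using assms(2) assms(1)[rule_format, of "a + int l - 1"] by (simp add: ecols_seg last_map of_nat_diff algebra_simps)

lemma ecols_seg_empty: "l = 0 \<Longrightarrow> ecols G (seg Z a l) = []"
  by (simp add: ecols_seg)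

lemma seg_distinct:
  assumes "\<forall>i j. Z i = Z j \<longleftrightarrow> i mod L = j mod L" "int l < L"
  shows "distinct (seg Z a l)"
proof -
  have "inj_on (\<lambda>t. Z (a + int t)) {0..<Suc l}"
  proof (rule inj_onI)
    fix s t assume s: "s \<in> {0..<Suc l}" and t: "t \<in> {0..<Suc l}" and e: "Z (a + int s) = Z (a + int t)"
    then have "(a + int s) mod L = (a + int t) mod L" using assms(1) by blast
    then have "int s mod L = int t mod L" by (metis add_diff_cancel_left' mod_diff_cong)
    moreover have "int s mod L = int s" "int t mod L = int t" using s t assms(2) by auto
    ultimately show "s = t" by simp
  qed
  then show ?thesis by (simp add: seg_def distinct_map del: upt_Suc)
qed


definition blk :: "int \<Rightarrow> nat \<Rightarrow> color list" where
  "blk s l = map (\<lambda>t. Fc (s + int t)) [0..<Suc l]"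

lemma blk_ne[simp]: "blk s l \<noteq> []" by (simp add: blk_def)
lemma hd_blk[simp]: "hd (blk s l) = Fc s" by (simp add: blk_def hd_map del: upt_Suc)
lemma last_blk[simp]: "last (blk s l) = Fc (s + int l)" by (simp add: blk_def last_map)
lemma blk_alt: "successively (\<noteq>) (blk s l)"
  by (auto simp: successively_nth blk_def Fc_def simp del: upt_Suc)

lemma ecols_seg_app:
  assumes "rest \<noteq> []" "col G {Z (s + int l), hd rest} = Fc (s + int l)"
    "\<forall>i. col G {Z i, Z (i+1)} = Fc i"
  shows "ecols G (seg Z s l @ rest) = blk s l @ ecols G rest"
proof -
  have "ecols G (seg Z s l) @ [Fc (s + int l)] = blk s l"
    using assms(3) by (simp add: ecols_seg blk_def)
  then show ?thesis using assms(1,2) by (simp add: ecols_append)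
qed

locale twocyc =
  fixes G :: "'a cgraph" and X Y :: "int \<Rightarrow> 'a" and LX LY :: int
  assumes cX: "calt G X LX" and cY: "calt G Y LY"
    and disj: "\<And>i j. X i \<noteq> Y j"
    and cross: "\<And>i j. {X i, Y j} \<in> edges G"
    and vX: "\<And>i. X i \<in> verts G" and vY: "\<And>j. Y j \<in> verts G"
begin

lemma X_inj: "X i = X j \<longleftrightarrow> i mod LX = j mod LX" using cX by (simp add: calt_def)
lemma Y_inj: "Y i = Y j \<longleftrightarrow> i mod LY = j mod LY" using cY by (simp add: calt_def)
lemma X_edge: "\<forall>i. {X i, X (i+1)} \<in> edges G" using cX by (simp add: calt_def)
lemma Y_edge: "\<forall>i. {Y i, Y (i+1)} \<in> edges G" using cY by (simp add: calt_def)
lemma X_col: "\<forall>i. col G {X i, X (i+1)} = Fc i" using cX by (simp add: calt_def)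
lemma Y_col: "\<forall>i. col G {Y i, Y (i+1)} = Fc i" using cY by (simp add: calt_def)
lemma cross': "{Y j, X i} \<in> edges G" using cross by (simp add: insert_commute)

lemma two_seg:
  assumes l1: "int l1 < LX" and l2: "int l2 < LY" and l12: "2 \<le> l1 + l2"
    and J1: "col G {X (a + int l1), Y b} = Fc (a + int l1)" "odd (a + int l1 + b)"
    and J2: "col G {Y (b + int l2), X a} = Fc (b + int l2)" "odd (b + int l2 + a)"
  shows "alt_cycle G (seg X a l1 @ seg Y b l2)"
proof (rule mk_alt_cycle)
  let ?P = "seg X a l1" and ?Q = "seg Y b l2"
  show "length (?P @ ?Q) \<ge> 3" using l12 by simp
  show "distinct (?P @ ?Q)"
    using seg_distinct[of X LX l1 a] seg_distinct[of Y LY l2 b] l1 l2 X_inj Y_inj disj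
    by (auto simp: set_seg)
  show "set (?P @ ?Q) \<subseteq> verts G" using vX vY by (auto simp: set_seg)
  have hd: "hd (?P @ ?Q) = X a" by simp
  show "successively (\<lambda>u v. {u, v} \<in> edges G) ((?P @ ?Q) @ [hd (?P @ ?Q)])"
    unfolding hd using seg_edges[OF X_edge] seg_edges[OF Y_edge] cross cross'
    by (simp add: successively_append_iff)
  have ec: "ecols G ((?P @ ?Q) @ [hd (?P @ ?Q)]) =
      ecols G ?P @ col G {X (a + int l1), Y b} # ecols G ?Q @ [col G {Y (b + int l2), X a}]"
    unfolding hd by (simp add: ecols_append)
  have c1: "Fc (a + int l1) \<noteq> Fc b" "Fc (b + int l2) \<noteq> Fc a"
    using J1 J2 by (auto simp: Fc_neq_iff add_ac)
  show "successively (\<noteq>) (ecols G ((?P @ ?Q) @ [hd (?P @ ?Q)]))"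
  proof -
    have A: "successively (\<noteq>) (ecols G ?P)" by (rule seg_alt[OF X_col])
    have B: "successively (\<noteq>) (ecols G ?Q)" by (rule seg_alt[OF Y_col])
    have C: "ecols G ?P = [] \<or> last (ecols G ?P) \<noteq> Fc (a + int l1)"
      using last_ecols_seg[OF X_col, of l1 a] Fc_Suc[of "a + int l1 - 1"]
      by (cases "l1 = 0") (auto simp: ecols_seg_empty)
    have D: "ecols G ?Q = [] \<or> Fc (a + int l1) \<noteq> hd (ecols G ?Q)"
      using hd_ecols_seg[OF Y_col, of l2 b] c1 l12
      by (cases "l2 = 0") (auto simp: ecols_seg_empty Fc_neq_iff add_ac)
    have E: "ecols G ?Q = [] \<or> last (ecols G ?Q) \<noteq> Fc (b + int l2)"
      using last_ecols_seg[OF Y_col, of l2 b] Fc_Suc[of "b + int l2 - 1"]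
      by (cases "l2 = 0") (auto simp: ecols_seg_empty)
    have F: "ecols G ?Q = [] \<longrightarrow> Fc (a + int l1) \<noteq> Fc (b + int l2)"
      using l12 c1 by (cases "l2 = 0") (auto simp: Fc_neq_iff add_ac ecols_seg)
    show ?thesis unfolding ec J1(1) J2(1) using A B C D E F
      by (cases "ecols G ?Q = []") (auto simp: successively_append_iff successively_Cons)
  qed
  show "hd (ecols G ((?P @ ?Q) @ [hd (?P @ ?Q)])) \<noteq> last (ecols G ((?P @ ?Q) @ [hd (?P @ ?Q)]))"
  proof (cases "l1 = 0")
    case True
    then show ?thesis unfolding ec J1(1) J2(1) using c1 by (simp add: ecols_seg_empty)
  next
    case False
    then have ne: "ecols G ?P \<noteq> []" by (simp add: ecols_seg)
    show ?thesis unfolding ec J1(1) J2(1) using hd_ecols_seg[OF X_col, of l1 a] False c1 ne by simp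
  qed
qed

lemma four_seg:
  assumes p: "int p1 + int p2 + 2 = LX" and q: "int q1 + int q2 + 2 = LY"
    and J1: "col G {X (a + int p1), Y b} = Fc (a + int p1)" "odd (a + int p1 + b)"
    and J2: "col G {Y (b + int q1), X (a + int p1 + 1)} = Fc (b + int q1)" "odd (b + int q1 + a + int p1 + 1)"
    and J3: "col G {X (a + int p1 + 1 + int p2), Y (b + int q1 + 1)} = Fc (a + int p1 + 1 + int p2)"
            "odd (a + int p1 + 1 + int p2 + b + int q1 + 1)"
    and J4: "col G {Y (b + int q1 + 1 + int q2), X a} = Fc (b + int q1 + 1 + int q2)"
            "odd (b + int q1 + 1 + int q2 + a)"
  shows "alt_cycle G (seg X a p1 @ seg Y b q1 @ seg X (a + int p1 + 1) p2 @ seg Y (b + int q1 + 1) q2)"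
proof (rule mk_alt_cycle)
  let ?P1 = "seg X a p1" and ?Q1 = "seg Y b q1" and ?P2 = "seg X (a + int p1 + 1) p2"
    and ?Q2 = "seg Y (b + int q1 + 1) q2"
  let ?vs = "?P1 @ ?Q1 @ ?P2 @ ?Q2"
  show "length ?vs \<ge> 3" by simp
  have dP: "distinct (?P1 @ ?P2)" unfolding seg_append
    using seg_distinct[OF X_inj[THEN allI, THEN allI]] p by simp
  have dQ: "distinct (?Q1 @ ?Q2)" unfolding seg_append
    using seg_distinct[OF Y_inj[THEN allI, THEN allI]] q by simp
  have dPQ: "set (?P1 @ ?P2) \<inter> set (?Q1 @ ?Q2) = {}" using disj by (auto simp: set_seg)
  show "distinct ?vs" using dP dQ dPQ by auto
  show "set ?vs \<subseteq> verts G" using vX vY by (auto simp: set_seg)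
  have hd: "hd ?vs = X a" by simp
  show "successively (\<lambda>u v. {u, v} \<in> edges G) (?vs @ [hd ?vs])"
    unfolding hd using seg_edges[OF X_edge] seg_edges[OF Y_edge] cross cross'
    by (simp add: successively_append_iff)
  have ec: "ecols G (?vs @ [hd ?vs]) = blk a p1 @ blk b q1 @ blk (a + int p1 + 1) p2 @ blk (b + int q1 + 1) q2"
    unfolding hd using J1(1) J2(1) J3(1) J4(1)
    by (simp add: ecols_seg_app[OF _ _ X_col] ecols_seg_app[OF _ _ Y_col])
  have c: "Fc (a + int p1) \<noteq> Fc b" "Fc (b + int q1) \<noteq> Fc (a + int p1 + 1)"
    "Fc (a + int p1 + 1 + int p2) \<noteq> Fc (b + int q1 + 1)" "Fc (b + int q1 + 1 + int q2) \<noteq> Fc a"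
    using J1(2) J2(2) J3(2) J4(2) by (auto simp: Fc_neq_iff add_ac)
  show "successively (\<noteq>) (ecols G (?vs @ [hd ?vs]))"
    unfolding ec using c by (simp add: successively_append_iff blk_alt)
  show "hd (ecols G (?vs @ [hd ?vs])) \<noteq> last (ecols G (?vs @ [hd ?vs]))"
    unfolding ec using c by simp
qed

end


lemma col_two: "c \<noteq> Fc i \<Longrightarrow> odd (i + j) \<Longrightarrow> c = Fc j"
  by (cases c) (auto simp: Fc_def)

lemma Fc_per: "Fc (i + 2 * k) = Fc i" by (simp add: Fc_def)

lemma disc_ivt:
  fixes P :: "int \<Rightarrow> bool"
  shows "P s \<Longrightarrow> \<not> P (s + 2 * int t) \<Longrightarrow> \<exists>u. (\<exists>r. u = s + 2 * r) \<and> P u \<and> \<not> P (u + 2)"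
proof (induction t)
  case 0 then show ?case by simp
next
  case (Suc t)
  show ?case
  proof (cases "P (s + 2 * int t)")
    case True
    then show ?thesis using Suc.prems by (intro exI[of _ "s + 2 * int t"]) (auto simp: algebra_simps)
  next
    case False
    then show ?thesis using Suc by blast
  qed
qed

lemma trans_exists:
  fixes P :: "int \<Rightarrow> bool" and n :: int
  assumes per: "\<And>s. P (s + 2 * n) = P s" and n: "n > 0"
    and s1: "P s1" "odd s1" and s2: "\<not> P s2" "odd s2"
  shows "\<exists>u. odd u \<and> P u \<and> \<not> P (u + 2)"
proof -
  have perk: "P (s + 2 * n * int k) = P s" for s k
    by (induction k) (auto simp: algebra_simps per[of "s + 2 * n * int _", simplified algebra_simps] per)
  define k where "k = nat \<bar>s1 - s2\<bar>"
  define s2' where "s2' = s2 + 2 * n * int k"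
  have "\<not> P s2'" using s2 perk unfolding s2'_def by simp
  have "1 * int k \<le> (2 * n) * int k" by (rule mult_right_mono) (use n in auto)
  then have "s2' \<ge> s1" unfolding s2'_def k_def by simp
  moreover have "even (s2' - s1)" unfolding s2'_def using s1 s2 by simp
  ultimately obtain t where t: "s2' = s1 + 2 * int t"
  proof -
    obtain r where r: "s2' - s1 = 2 * r" using \<open>even (s2' - s1)\<close> by blast
    then have "r \<ge> 0" using \<open>s2' \<ge> s1\<close> by simp
    then show ?thesis using r that[of "nat r"] by simp
  qed
  obtain u r where "u = s1 + 2 * r" "P u" "\<not> P (u + 2)"
    using disc_ivt[of P s1 t] s1 \<open>\<not> P s2'\<close> t by blast
  moreover have "odd u" using \<open>u = s1 + 2 * r\<close> s1 by simp
  ultimately show ?thesis by blast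
qed


lemma choose_e:
  fixes n m K :: int
  assumes "n \<ge> 2" "m \<ge> 2" "1 \<le> K" "K \<le> n + m - 2"
  shows "\<exists>\<epsilon> \<alpha> \<beta>. (\<epsilon> = 1 \<or> \<epsilon> = -1) \<and> 0 \<le> K - (\<epsilon> + n*\<alpha> + m*\<beta>) \<and> K - (\<epsilon> + n*\<alpha> + m*\<beta>) \<le> 2*n - 1
     \<and> 0 \<le> K + (\<epsilon> + n*\<alpha> + m*\<beta>) \<and> K + (\<epsilon> + n*\<alpha> + m*\<beta>) \<le> 2*m - 1"
proof (cases "n \<le> m")
  case True
  show ?thesis
  proof (cases "K \<ge> m - n - 1")
    case True
    then show ?thesis using \<open>n \<le> m\<close> assms
      by (intro exI[of _ "-1"] exI[of _ "-1"] exI[of _ 1]) auto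
  next
    case False
    define d where "d = (K - 1) div n"
    define r where "r = (K - 1) mod n"
    have r4: "r \<le> K - 1" unfolding r_def by (rule zmod_le_nonneg_dividend) (use assms in simp)
    have r: "K - 1 = n * d + r" "0 \<le> r" "r < n" "r \<le> K - 1" unfolding d_def r_def using assms r4[unfolded r_def]
      by auto
    show ?thesis using False \<open>n \<le> m\<close> assms r
      by (intro exI[of _ "1"] exI[of _ d] exI[of _ 0]) auto
  qed
next
  case False
  show ?thesis
  proof (cases "K \<ge> n - m - 1")
    case True
    then show ?thesis using \<open>\<not> n \<le> m\<close> assms
      by (intro exI[of _ "1"] exI[of _ "-1"] exI[of _ 1]) auto
  next
    case F: False
    define d where "d = (K - 1) div m"
    define r where "r = (K - 1) mod m"
    have r4: "r \<le> K - 1" unfolding r_def by (rule zmod_le_nonneg_dividend) (use assms in simp)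
    have r: "K - 1 = m * d + r" "0 \<le> r" "r < m" "r \<le> K - 1" unfolding d_def r_def using assms r4[unfolded r_def]
      by auto
    show ?thesis using F \<open>\<not> n \<le> m\<close> assms r
      by (intro exI[of _ "-1"] exI[of _ 0] exI[of _ "-d"]) auto
  qed
qed


locale core0 = twocyc +
  fixes n m :: int
  assumes LXn: "LX = 2*n" and LYm: "LY = 2*m" and n2: "n \<ge> 2" and m2: "m \<ge> 2"
    and ngp: "\<And>i j. odd (i+j) \<Longrightarrow> col G {X i, Y j} = Fc i \<Longrightarrow> col G {X (i+1), Y (j - 1)} = Fc (i+1)"
begin

definition tX where "tX i j \<longleftrightarrow> col G {X i, Y j} = Fc i"
definition W where "W s = tX s 0"

lemma X_per: "X (i + 2*n*k) = X i" using X_inj[of "i + 2*n*k" i] LXn by simp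
lemma Y_per: "Y (j + 2*m*k) = Y j" using Y_inj[of "j + 2*m*k" j] LYm by simp

lemma tX_perX: "tX (i + 2*n*k) j = tX i j"
  unfolding tX_def using X_per[of i k] Fc_per[of i "n*k"] by (simp add: mult.assoc)
lemma tX_perY: "tX i (j + 2*m*k) = tX i j"
  unfolding tX_def using Y_per[of j k] by simp

lemma shift_nat: "odd (i+j) \<Longrightarrow> tX i j \<Longrightarrow> tX (i + int t) (j - int t)"
proof (induction t)
  case 0 then show ?case by simp
next
  case (Suc t)
  have o: "odd (i + int t + (j - int t))" using Suc.prems by simp
  have "tX (i + int t) (j - int t)" using Suc by blast
  then have "tX (i + int t + 1) (j - int t - 1)" using ngp[OF o] unfolding tX_def by simp
  then show ?case by (simp add: algebra_simps)
qed

lemma shift_back: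
  assumes o: "odd (i+j)" and t: "tX (i+1) (j-1)" shows "tX i j"
proof -
  have o': "odd (i + 1 + (j - 1))" using o by simp
  have "2*2 \<le> n*m" using mult_mono[of 2 n 2 m] n2 m2 by simp
  then have pos: "4*n*m - 1 \<ge> 0" by (simp add: mult.commute)
  have "tX (i + 1 + int (nat (4*n*m - 1))) (j - 1 - int (nat (4*n*m - 1)))"
    by (rule shift_nat[OF o' t])
  then have "tX (i + 2*n*(2*m)) (j + 2*m*(-2*n))" using pos by (simp add: algebra_simps)
  moreover have "tX (i + 2*n*(2*m)) (j + 2*m*(-2*n)) = tX i (j + 2*m*(-2*n))" by (rule tX_perX)
  moreover have "tX i (j + 2*m*(-2*n)) = tX i j" by (rule tX_perY)
  ultimately show ?thesis by simp
qed

lemma shift_iff: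
  assumes o: "odd (i+j)" shows "tX (i+1) (j-1) \<longleftrightarrow> tX i j"
proof
  assume "tX (i+1) (j-1)" then show "tX i j" by (rule shift_back[OF o])
next
  assume "tX i j" then show "tX (i+1) (j-1)" using shift_nat[OF o, of 1] by simp
qed

lemma shift_int: "odd (i+j) \<Longrightarrow> tX (i+k) (j-k) \<longleftrightarrow> tX i j"
proof (induction k rule: int_induct[where k=0])
  case base then show ?case by simp
next
  case (step1 k)
  have o: "odd (i + k + (j - k))" using step1.prems by simp
  have e1: "i + (k + 1) = i + k + 1" "j - (k + 1) = j - k - 1" by simp_all
  show ?case unfolding e1 shift_iff[OF o] using step1 by blast
next
  case (step2 k)
  have o: "odd (i + (k - 1) + (j - (k - 1)))" using step2.prems by simp
  have e1: "i + k = i + (k - 1) + 1" "j - k = j - (k - 1) - 1" by simp_all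
  have "tX (i + k) (j - k) \<longleftrightarrow> tX (i + (k - 1)) (j - (k - 1))" unfolding e1 by (rule shift_iff[OF o])
  then show ?case using step2 by blast
qed

lemma tX_W: "odd (i+j) \<Longrightarrow> tX i j \<longleftrightarrow> W (i+j)"
  unfolding W_def using shift_int[of i j j] by simp

lemma W_per: "odd s \<Longrightarrow> W (s + 2*n*a + 2*m*b) = W s"
proof -
  assume o: "odd s"
  have "W (s + 2*n*a + 2*m*b) = tX (s + 2*m*b + 2*n*a) 0" unfolding W_def by (simp add: add_ac)
  also have "\<dots> = tX (s + 2*m*b) 0" by (rule tX_perX)
  also have "\<dots> = tX s (2*m*b)" using tX_W[of s "2*m*b"] o unfolding W_def by simp
  also have "\<dots> = tX s 0" using tX_perY[of s 0 b] by simp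
  finally show ?thesis unfolding W_def .
qed

lemma W_per1: "W (s + 2 * n) = W s"
  unfolding W_def using tX_perX[of s 1 0] by simp

end

locale core = core0 +
  assumes nonconst: "\<exists>s1 s2. odd s1 \<and> odd s2 \<and> col G {X s1, Y 0} = Fc s1 \<and> col G {X s2, Y 0} \<noteq> Fc s2"
begin

lemma trans_W: "\<epsilon> = 1 \<or> \<epsilon> = -1 \<Longrightarrow> \<exists>u. odd u \<and> W u \<and> \<not> W (u + 2*\<epsilon>)"
proof -
  assume e: "\<epsilon> = 1 \<or> \<epsilon> = -1"
  obtain s1 s2 where s: "odd s1" "odd s2" "W s1" "\<not> W s2"
    using nonconst unfolding W_def tX_def by blast
  have np: "n > 0" using n2 by simp
  show ?thesis
  proof (cases "\<epsilon> = 1")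
    case True
    then show ?thesis using trans_exists[of W n s1 s2] W_per1 np s by simp
  next
    case False
    then have "\<epsilon> = -1" using e by simp
    obtain u where "odd u" "\<not> W u" "W (u + 2)"
      using trans_exists[of "\<lambda>x. \<not> W x" n s2 s1] W_per1 np s by auto
    then show ?thesis using \<open>\<epsilon> = -1\<close> by (intro exI[of _ "u + 2"]) auto
  qed
qed

end


lemma seg_hd_in: "Z a \<in> set (seg Z a l)" by (metis hd_in_set hd_seg seg_ne)

context core begin

lemma cyc_small:
  assumes k: "2 \<le> k" "k \<le> n + m - 1" and v: "v \<in> range X \<union> range Y"
  shows "\<exists>vs. alt_cycle G vs \<and> int (length vs) = 2*k \<and> v \<in> set vs"
proof -
  define K where "K = k - 1"
  obtain \<epsilon> \<alpha> \<beta> where ep: "\<epsilon> = 1 \<or> \<epsilon> = -1"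
    and bd: "0 \<le> K - (\<epsilon> + n*\<alpha> + m*\<beta>)" "K - (\<epsilon> + n*\<alpha> + m*\<beta>) \<le> 2*n - 1"
       "0 \<le> K + (\<epsilon> + n*\<alpha> + m*\<beta>)" "K + (\<epsilon> + n*\<alpha> + m*\<beta>) \<le> 2*m - 1"
    using choose_e[of n m K] n2 m2 k unfolding K_def by auto
  define e where "e = \<epsilon> + n*\<alpha> + m*\<beta>"
  obtain u where u: "odd u" "W u" "\<not> W (u + 2*\<epsilon>)" using trans_W[OF ep] by blast
  define l1 where "l1 = nat (K - e)"
  define l2 where "l2 = nat (K + e)"
  have l1i: "int l1 = K - e" and l2i: "int l2 = K + e" using bd unfolding l1_def l2_def e_def by auto
  define s where "s = u - (K - e)"
  have oe: "odd (u + 2*\<epsilon>)" using u by simp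
  have Wue: "\<not> W (u + 2*e)"
  proof -
    have "W (u + 2*e) = W (u + 2*\<epsilon> + 2*n*\<alpha> + 2*m*\<beta>)" unfolding e_def by (simp add: algebra_simps)
    also have "\<dots> = W (u + 2*\<epsilon>)" by (rule W_per[OF oe])
    finally show ?thesis using u by simp
  qed
  have cyc: "alt_cycle G (seg X a l1 @ seg Y b l2)" if ab: "a + b = s" for a b
  proof (rule two_seg)
    show "int l1 < LX" using l1i bd LXn unfolding e_def by simp
    show "int l2 < LY" using l2i bd LYm unfolding e_def by simp
    show "2 \<le> l1 + l2" using l1i l2i k unfolding K_def by simp
    have s1: "a + int l1 + b = u" using ab l1i unfolding s_def by simp
    show o1: "odd (a + int l1 + b)" using s1 u by simp
    have "tX (a + int l1) b" using tX_W[OF o1] s1 u by simp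
    then show "col G {X (a + int l1), Y b} = Fc (a + int l1)" unfolding tX_def .
    have s2: "b + int l2 + a = u + 2*e" using ab l2i l1i unfolding s_def by simp
    show o2: "odd (b + int l2 + a)" using s2 u by simp
    have o2': "odd (a + (b + int l2))" using o2 by (simp add: add_ac)
    have "\<not> tX a (b + int l2)" using tX_W[OF o2'] s2 Wue by (simp add: add_ac)
    then have "col G {X a, Y (b + int l2)} = Fc (b + int l2)"
      unfolding tX_def by (rule col_two[OF _ o2'])
    then show "col G {Y (b + int l2), X a} = Fc (b + int l2)" by (simp add: insert_commute)
  qed
  have len: "int (length (seg X a l1 @ seg Y b l2)) = 2*k" for a b
    using l1i l2i unfolding K_def by simp
  from v show ?thesis
  proof
    assume "v \<in> range X"
    then obtain i where "v = X i" by auto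
    then show ?thesis using cyc[of i "s - i"] len[of i "s - i"]
      by (intro exI[of _ "seg X i l1 @ seg Y (s - i) l2"]) (auto intro: seg_hd_in)
  next
    assume "v \<in> range Y"
    then obtain j where "v = Y j" by auto
    then show ?thesis using cyc[of "s - j" j] len[of "s - j" j]
      by (intro exI[of _ "seg X (s - j) l1 @ seg Y j l2"]) (auto intro: seg_hd_in)
  qed
qed

lemma cyc_ham:
  assumes v: "v \<in> range X \<union> range Y"
  shows "\<exists>vs. alt_cycle G vs \<and> int (length vs) = 2*(n+m) \<and> v \<in> set vs"
proof -
  obtain p where p: "odd p" "W p" "\<not> W (p + 2*1)" using trans_W[of 1] by blast
  obtain u2 where u2: "odd u2" "W u2" "\<not> W (u2 + 2*(-1))" using trans_W[of "-1"] by auto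
  define q where "q = u2 - 2"
  have q: "odd q" "\<not> W q" "W (q + 2)" using u2 unfolding q_def by simp_all
  define r where "r = (q - p - 1) mod (2*m)"
  define c where "c = (q - p - 1) div (2*m)"
  have qr: "q - p - 1 = 2*m*c + r" "0 \<le> r" "r < 2*m" unfolding r_def c_def using m2 by auto
  have rne: "r \<noteq> 2*m - 1"
  proof
    assume "r = 2*m - 1"
    then have "q = p + 2*n*0 + 2*m*(c+1)" using qr by (simp add: algebra_simps)
    then have "W q = W p" using W_per[OF p(1), of 0 "c+1"] by simp
    then show False using p q by simp
  qed
  define a where "a = (0::int)"
  define b where "b = p + 3"
  define p1 where "p1 = nat (2*n - 3)"
  define p2 where "p2 = (1::nat)"
  define q1 where "q1 = nat r"
  define q2 where "q2 = nat (2*m - 2 - r)"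
  have p1i: "int p1 = 2*n - 3" using n2 unfolding p1_def by simp
  have q1i: "int q1 = r" using qr unfolding q1_def by simp
  have q2i: "int q2 = 2*m - 2 - r" using qr rne unfolding q2_def by simp
  have cyc: "alt_cycle G (seg X a p1 @ seg Y b q1 @ seg X (a + int p1 + 1) p2 @ seg Y (b + int q1 + 1) q2)"
  proof (rule four_seg)
    show "int p1 + int p2 + 2 = LX" using p1i LXn unfolding p2_def by simp
    show "int q1 + int q2 + 2 = LY" using q1i q2i LYm by simp
    have e1: "a + int p1 + b = p + 2*n*1 + 2*m*0" unfolding a_def b_def using p1i by simp
    show o1: "odd (a + int p1 + b)" using e1 p by simp
    have "tX (a + int p1) b" using tX_W[OF o1] e1 W_per[OF p(1), of 1 0] p by simp
    then show "col G {X (a + int p1), Y b} = Fc (a + int p1)" unfolding tX_def .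
    have e2: "b + int q1 + a + int p1 + 1 = q + 2*n*1 + 2*m*(-c)"
      unfolding a_def b_def using p1i q1i qr by (simp add: algebra_simps)
    show o2: "odd (b + int q1 + a + int p1 + 1)" using e2 q by simp
    have o2': "odd (a + int p1 + 1 + (b + int q1))" using o2 by (simp add: add_ac)
    have "\<not> tX (a + int p1 + 1) (b + int q1)"
      using tX_W[OF o2'] e2 W_per[OF q(1), of 1 "-c"] q by (simp add: add_ac)
    then have "col G {X (a + int p1 + 1), Y (b + int q1)} = Fc (b + int q1)"
      unfolding tX_def by (rule col_two[OF _ o2'])
    then show "col G {Y (b + int q1), X (a + int p1 + 1)} = Fc (b + int q1)" by (simp add: insert_commute)
    have e3: "a + int p1 + 1 + int p2 + b + int q1 + 1 = (q + 2) + 2*n*1 + 2*m*(-c)"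
      unfolding a_def b_def p2_def using p1i q1i qr by (simp add: algebra_simps)
    have oq2: "odd (q + 2)" using q by simp
    show o3: "odd (a + int p1 + 1 + int p2 + b + int q1 + 1)" using e3 q by simp
    have o3': "odd (a + int p1 + 1 + int p2 + (b + int q1 + 1))" using o3 by (simp add: add_ac)
    have e3': "a + int p1 + 1 + int p2 + (b + int q1 + 1) = (q + 2) + 2*n*1 + 2*m*(-c)"
      using e3 by (simp add: add_ac)
    have "tX (a + int p1 + 1 + int p2) (b + int q1 + 1) = W ((q + 2) + 2*n*1 + 2*m*(-c))"
      unfolding e3'[symmetric] by (rule tX_W[OF o3'])
    also have "\<dots> = W (q + 2)" by (rule W_per[OF oq2])
    finally have "tX (a + int p1 + 1 + int p2) (b + int q1 + 1)" using q by simp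
    then show "col G {X (a + int p1 + 1 + int p2), Y (b + int q1 + 1)} = Fc (a + int p1 + 1 + int p2)"
      unfolding tX_def .
    have e4: "b + int q1 + 1 + int q2 + a = (p + 2) + 2*n*0 + 2*m*1"
      unfolding a_def b_def using q1i q2i by (simp add: algebra_simps)
    have op2: "odd (p + 2)" using p by simp
    show o4: "odd (b + int q1 + 1 + int q2 + a)" unfolding e4 using p by simp
    have o4': "odd (a + (b + int q1 + 1 + int q2))" using o4 by (simp add: add_ac)
    have e4': "a + (b + int q1 + 1 + int q2) = (p + 2) + 2*n*0 + 2*m*1"
      using e4 by (simp add: add_ac)
    have "tX a (b + int q1 + 1 + int q2) = W ((p + 2) + 2*n*0 + 2*m*1)"
      unfolding e4'[symmetric] by (rule tX_W[OF o4'])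
    also have "\<dots> = W (p + 2)" by (rule W_per[OF op2])
    finally have "\<not> tX a (b + int q1 + 1 + int q2)" using p by simp
    then have "col G {X a, Y (b + int q1 + 1 + int q2)} = Fc (b + int q1 + 1 + int q2)"
      unfolding tX_def by (rule col_two[OF _ o4'])
    then show "col G {Y (b + int q1 + 1 + int q2), X a} = Fc (b + int q1 + 1 + int q2)"
      by (simp add: insert_commute)
  qed
  let ?vs = "seg X a p1 @ seg Y b q1 @ seg X (a + int p1 + 1) p2 @ seg Y (b + int q1 + 1) q2"
  have len: "int (length ?vs) = 2*(n+m)" using p1i q1i q2i unfolding p2_def by simp
  have sX: "set (seg X a (p1 + p2 + 1)) \<subseteq> set ?vs" unfolding seg_append[of X a p1 p2, symmetric] by auto
  have sY: "set (seg Y b (q1 + q2 + 1)) \<subseteq> set ?vs" unfolding seg_append[of Y b q1 q2, symmetric] by auto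
  from v have "v \<in> set ?vs"
  proof
    assume "v \<in> range X"
    then obtain i where vi: "v = X i" by auto
    define t where "t = nat (i mod (2*n))"
    have ti: "int t = i mod (2*n)" unfolding t_def using n2 by simp
    have "X i = X (a + int t)" using X_inj[of i "a + int t"] ti LXn unfolding a_def by simp
    moreover have "t \<le> p1 + p2 + 1"
    proof -
      have "i mod (2*n) < 2*n" using n2 by simp
      then have "int t \<le> int p1 + int p2 + 1" using ti p1i unfolding p2_def by simp
      then show ?thesis by linarith
    qed
    ultimately have "v \<in> set (seg X a (p1 + p2 + 1))" using vi by (auto simp: set_seg)
    then show ?thesis using sX by blast
  next
    assume "v \<in> range Y"
    then obtain j where vj: "v = Y j" by auto
    define t where "t = nat ((j - b) mod (2*m))"
    have ti: "int t = (j - b) mod (2*m)" unfolding t_def using m2 by simp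
    have "(b + (j - b) mod (2*m)) mod (2*m) = (b + (j - b)) mod (2*m)" by (rule mod_add_right_eq)
    then have "Y j = Y (b + int t)" using Y_inj[of j "b + int t"] ti LYm by simp
    moreover have "t \<le> q1 + q2 + 1"
    proof -
      have "(j - b) mod (2*m) < 2*m" using m2 by simp
      then have "int t \<le> int q1 + int q2 + 1" using ti q1i q2i by simp
      then show ?thesis by linarith
    qed
    ultimately have "v \<in> set (seg Y b (q1 + q2 + 1))" using vj by (auto simp: set_seg)
    then show ?thesis using sY by blast
  qed
  then show ?thesis using cyc len by blast
qed

end


definition Z0 :: "'a list \<Rightarrow> int \<Rightarrow> 'a" where
  "Z0 zs i = zs ! nat (i mod int (length zs))"

definition rc :: "'a cgraph \<Rightarrow> (int \<Rightarrow> 'a) \<Rightarrow> int \<Rightarrow> bool" where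
  "rc G Z L \<longleftrightarrow> L > 0 \<and> (\<forall>i j. Z i = Z j \<longleftrightarrow> i mod L = j mod L) \<and>
     (\<forall>i. {Z i, Z (i+1)} \<in> edges G) \<and> (\<forall>i. col G {Z i, Z (i+1)} \<noteq> col G {Z (i+1), Z (i+2)})"

definition nbr :: "'a list \<Rightarrow> (int \<Rightarrow> 'a) \<Rightarrow> bool" where
  "nbr zs Z \<longleftrightarrow> (\<forall>i. \<exists>k < length zs. zs ! k = Z i \<and>
     {Z (i+1), Z (i-1)} = {zs ! ((k + 1) mod length zs), zs ! ((k + length zs - 1) mod length zs)})"

lemma nat_mod_succ:
  assumes "zs \<noteq> []"
  shows "nat ((i + 1) mod int (length zs)) = (nat (i mod int (length zs)) + 1) mod length zs"
proof -
  let ?L = "int (length zs)"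
  define k where "k = nat (i mod ?L)"
  have k: "int k = i mod ?L" unfolding k_def using assms by simp
  have "(i + 1) mod ?L = (int k + 1) mod ?L" using k by (simp add: mod_add_left_eq)
  also have "\<dots> = int ((k + 1) mod length zs)" by (simp add: zmod_int add.commute)
  finally show ?thesis unfolding k_def[symmetric] by simp
qed

lemma Z0_succ:
  assumes "zs \<noteq> []"
  shows "Z0 zs (i + 1) = zs ! ((nat (i mod int (length zs)) + 1) mod length zs)"
  unfolding Z0_def nat_mod_succ[OF assms] ..

lemma Z0_pred:
  assumes "zs \<noteq> []"
  shows "Z0 zs (i - 1) = zs ! ((nat (i mod int (length zs)) + length zs - 1) mod length zs)"
proof -
  let ?L = "int (length zs)"
  define k where "k = nat (i mod ?L)"
  have k: "int k = i mod ?L" unfolding k_def using assms by simp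
  have "(i - 1) mod ?L = (i mod ?L - 1) mod ?L" by (simp add: mod_diff_left_eq)
  also have "\<dots> = (int k - 1 + ?L) mod ?L" using k by simp
  finally have "(i - 1) mod ?L = (int k + ?L - 1) mod ?L" by (simp add: algebra_simps)
  also have "\<dots> = int ((k + length zs - 1) mod length zs)"
  proof -
    have "int (k + length zs - 1) = int k + ?L - 1" using assms by (cases zs) auto
    then show ?thesis by (simp add: zmod_int)
  qed
  finally show ?thesis unfolding Z0_def k_def[symmetric] by simp
qed

lemma Z0_lt: "zs \<noteq> [] \<Longrightarrow> nat (i mod int (length zs)) < length zs"
  by (simp add: nat_less_iff)

lemma Z0_range: "zs \<noteq> [] \<Longrightarrow> range (Z0 zs) = set zs"
proof
  assume ne: "zs \<noteq> []"
  show "range (Z0 zs) \<subseteq> set zs" unfolding Z0_def using Z0_lt[OF ne] by auto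
  show "set zs \<subseteq> range (Z0 zs)"
  proof
    fix x assume "x \<in> set zs"
    then obtain k where k: "k < length zs" "zs ! k = x" by (auto simp: in_set_conv_nth)
    then have "Z0 zs (int k) = x" unfolding Z0_def by simp
    then show "x \<in> range (Z0 zs)" by (metis rangeI)
  qed
qed

lemma Z0_rc:
  assumes a: "alt_cycle G zs"
  shows "rc G (Z0 zs) (int (length zs))" "nbr zs (Z0 zs)"
proof -
  have L3: "length zs \<ge> 3" and d: "distinct zs" and E: "\<forall>i < length zs. cyc_edge zs i \<in> edges G"
    and C: "\<forall>i < length zs. col G (cyc_edge zs i) \<noteq> col G (cyc_edge zs ((i + 1) mod length zs))"
    using a unfolding alt_cycle_def by auto
  have ne: "zs \<noteq> []" using L3 by auto
  let ?L = "int (length zs)"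
  have inj: "Z0 zs i = Z0 zs j \<longleftrightarrow> i mod ?L = j mod ?L" for i j
  proof -
    have "Z0 zs i = Z0 zs j \<longleftrightarrow> nat (i mod ?L) = nat (j mod ?L)"
      unfolding Z0_def using Z0_lt[OF ne] d by (simp add: nth_eq_iff_index_eq)
    also have "\<dots> \<longleftrightarrow> i mod ?L = j mod ?L" using ne by (intro eq_nat_nat_iff) simp_all
    finally show ?thesis .
  qed
  have ce: "{Z0 zs i, Z0 zs (i+1)} = cyc_edge zs (nat (i mod ?L))" for i
    unfolding cyc_edge_def Z0_succ[OF ne] by (simp add: Z0_def)
  have ce2: "{Z0 zs (i+1), Z0 zs (i+2)} = cyc_edge zs ((nat (i mod ?L) + 1) mod length zs)" for i
  proof -
    have "nat ((i + 1) mod ?L) = (nat (i mod ?L) + 1) mod length zs" by (rule nat_mod_succ[OF ne])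
    then show ?thesis using ce[of "i+1"] by (simp add: add.assoc)
  qed
  show "rc G (Z0 zs) ?L"
    unfolding rc_def
  proof (intro conjI allI)
    show "0 < ?L" using ne by simp
    fix i
    have lt: "nat (i mod ?L) < length zs" by (rule Z0_lt[OF ne])
    show "{Z0 zs i, Z0 zs (i + 1)} \<in> edges G" unfolding ce using E lt by blast
    show "col G {Z0 zs i, Z0 zs (i + 1)} \<noteq> col G {Z0 zs (i + 1), Z0 zs (i + 2)}"
      unfolding ce ce2 using C lt by blast
  next
    fix i j show "(Z0 zs i = Z0 zs j) = (i mod ?L = j mod ?L)" by (rule inj)
  qed
  show "nbr zs (Z0 zs)"
    unfolding nbr_def
  proof
    fix i
    show "\<exists>k<length zs. zs ! k = Z0 zs i \<and>
       {Z0 zs (i + 1), Z0 zs (i - 1)} = {zs ! ((k + 1) mod length zs), zs ! ((k + length zs - 1) mod length zs)}"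
      unfolding Z0_succ[OF ne, of i] Z0_pred[OF ne, of i]
      by (intro exI[of _ "nat (i mod ?L)"] conjI Z0_lt[OF ne]) (simp_all only: Z0_def)
  qed
qed


lemma mod_neg_iff: "(- i) mod (L::int) = (- j) mod L \<longleftrightarrow> i mod L = j mod L"
  by (metis minus_minus mod_minus_cong)

lemma mod_shift_iff: "(i + ofs) mod (L::int) = (j + ofs) mod L \<longleftrightarrow> i mod L = j mod L"
  by (metis add_diff_cancel_right' mod_add_cong mod_diff_cong)

lemma rc_E: "rc G Z L \<Longrightarrow> {Z i, Z (i+1)} \<in> edges G" by (simp add: rc_def)
lemma rc_C: "rc G Z L \<Longrightarrow> col G {Z i, Z (i+1)} \<noteq> col G {Z (i+1), Z (i+2)}" by (simp add: rc_def)

lemma rc_neg: assumes "rc G Z L" shows "rc G (\<lambda>i. Z (- i)) L"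
  unfolding rc_def
proof (intro conjI allI)
  show "L > 0" using assms by (simp add: rc_def)
  fix i
  have e: "{Z (-i - 1), Z (-i - 1 + 1)} \<in> edges G" by (rule rc_E[OF assms])
  have eq: "- (i + 1) = -i - 1" "- (i + 2) = -i - 2" "-i - 1 + 1 = -i" "-i - 2 + 1 = -i - 1" "-i - 2 + 2 = -i" by simp_all
  from e show "{Z (- i), Z (- (i + 1))} \<in> edges G" unfolding eq by (simp add: insert_commute)
  have "col G {Z (-i - 2), Z (-i - 2 + 1)} \<noteq> col G {Z (-i - 2 + 1), Z (-i - 2 + 2)}"
    by (rule rc_C[OF assms])
  then show "col G {Z (- i), Z (- (i + 1))} \<noteq> col G {Z (- (i + 1)), Z (- (i + 2))}"
    unfolding eq by (simp add: insert_commute)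
next
  fix i j show "(Z (- i) = Z (- j)) = (i mod L = j mod L)"
    using assms mod_neg_iff by (simp add: rc_def)
qed

lemma rc_shift: assumes "rc G Z L" shows "rc G (\<lambda>i. Z (i + ofs)) L"
  unfolding rc_def
proof (intro conjI allI)
  show "L > 0" using assms by (simp add: rc_def)
  fix i
  have "{Z (i + ofs), Z (i + ofs + 1)} \<in> edges G" by (rule rc_E[OF assms])
  then show "{Z (i + ofs), Z (i + 1 + ofs)} \<in> edges G" by (simp add: algebra_simps)
  have "col G {Z (i + ofs), Z (i + ofs + 1)} \<noteq> col G {Z (i + ofs + 1), Z (i + ofs + 2)}"
    by (rule rc_C[OF assms])
  then show "col G {Z (i + ofs), Z (i + 1 + ofs)} \<noteq> col G {Z (i + 1 + ofs), Z (i + 2 + ofs)}"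
    by (simp add: algebra_simps)
next
  fix i j show "(Z (i + ofs) = Z (j + ofs)) = (i mod L = j mod L)"
    using assms mod_shift_iff by (simp add: rc_def)
qed

definition oth :: "color \<Rightarrow> color" where "oth c = (if c = Red then Blue else Red)"

lemma neq_oth: "d \<noteq> c \<Longrightarrow> d = oth c" by (cases c; cases d) (auto simp: oth_def)

lemma rc_colors:
  assumes "rc G Z L"
  shows "col G {Z i, Z (i+1)} = (if even i then col G {Z 0, Z 1} else oth (col G {Z 0, Z 1}))"
proof (induction i rule: int_induct[where k=0])
  case base then show ?case by simp
next
  case (step1 i)
  have "col G {Z i, Z (i+1)} \<noteq> col G {Z (i+1), Z (i+1+1)}"
    using rc_C[OF assms, of i] by (simp add: add.assoc)
  then have "col G {Z (i+1), Z (i+1+1)} = oth (col G {Z i, Z (i+1)})" using neq_oth by metis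
  then show ?case using step1 by (cases "col G {Z 0, Z 1}") (auto simp: oth_def)
next
  case (step2 i)
  have "col G {Z (i-1), Z (i-1+1)} \<noteq> col G {Z (i-1+1), Z (i-1+2)}"
    by (rule rc_C[OF assms])
  then have "col G {Z (i-1), Z (i-1+1)} = oth (col G {Z i, Z (i+1)})" using neq_oth
    by (simp add: algebra_simps)
  then show ?case using step2 by (cases "col G {Z 0, Z 1}") (auto simp: oth_def)
qed

lemma rc_norm:
  assumes "rc G Z L"
  shows "\<exists>ofs. calt G (\<lambda>i. Z (i + ofs)) L"
proof -
  have r: "rc G (\<lambda>i. Z (i + ofs)) L" for ofs by (rule rc_shift[OF assms])
  show ?thesis
  proof (cases "col G {Z 0, Z 1} = Red")
    case True
    have "col G {Z (i + 0), Z (i + 1 + 0)} = Fc i" for i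
      using rc_colors[OF assms, of i] True by (simp add: Fc_def oth_def)
    then show ?thesis using r[of 0] unfolding rc_def calt_def by (intro exI[of _ 0]) auto
  next
    case False
    have "col G {Z (i + 1), Z (i + 1 + 1)} = Fc i" for i
      using rc_colors[OF assms, of "i+1"] False by (cases "col G {Z 0, Z 1}") (auto simp: Fc_def oth_def)
    then have "col G {Z (i + 1), Z (i + 1 + 1)} = Fc i" for i by simp
    then show ?thesis using r[of 1] unfolding rc_def calt_def
      by (intro exI[of _ 1]) (auto simp: add_ac)
  qed
qed

lemma calt_even: assumes "calt G Z L" shows "even L"
proof -
  have L: "L > 0" and inj: "\<And>i j. Z i = Z j \<longleftrightarrow> i mod L = j mod L" and c: "\<And>i. col G {Z i, Z (i+1)} = Fc i"
    using assms unfolding calt_def by auto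
  have "Z L = Z 0" "Z (L + 1) = Z (0 + 1)" using inj by simp_all
  then have "Fc L = Fc 0" using c[of L] c[of 0] by simp
  then show ?thesis by (simp add: Fc_def split: if_splits)
qed


lemma sing_contra:
  fixes f :: "int \<Rightarrow> int \<Rightarrow> color"
  assumes H: "\<And>i j. (f i j = Fc i) \<longleftrightarrow> (if odd (i+j) then \<alpha> else \<beta>)"
    and S1: "f i j1 \<noteq> f i j2" and S2: "f i1 j \<noteq> f i2 j"
  shows False
proof -
  have two: "c \<noteq> Fc i \<Longrightarrow> d \<noteq> Fc i \<Longrightarrow> c = d" for c d :: color and i
    by (cases c; cases d) (auto simp: Fc_def split: if_splits)
  have ab: "\<alpha> \<noteq> \<beta>"
  proof
    assume "\<alpha> = \<beta>"
    then have "f i j1 = Fc i \<longleftrightarrow> f i j2 = Fc i" using H[of i j1] H[of i j2] by simp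
    then show False using S1 two[of "f i j1" i "f i j2"] by auto
  qed
  have F: "f i' j = (if \<alpha> then oth (Fc j) else Fc j)" for i'
  proof (cases "odd (i' + j)")
    case True
    then have "Fc i' = oth (Fc j)" by (auto simp: Fc_def oth_def)
    then show ?thesis using H[of i' j] True
      by (cases \<alpha>; cases "f i' j") (auto simp: Fc_def oth_def split: if_splits)
  next
    case False
    then have "Fc i' = Fc j" by (auto simp: Fc_def)
    then show ?thesis using H[of i' j] False ab
      by (cases \<alpha>; cases "f i' j") (auto simp: Fc_def oth_def split: if_splits)
  qed
  show False using S2 F[of i1] F[of i2] by simp
qed

lemma transfer_alt:
  assumes "alt_cycle H zs" "set zs \<subseteq> verts G" "\<And>e. e \<in> edges H \<Longrightarrow> e \<in> edges G \<and> col G e = col H e"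
  shows "alt_cycle G zs"
proof -
  have L: "length zs > 0" using assms(1) by (auto simp: alt_cycle_def)
  have e: "cyc_edge zs i \<in> edges H" if "i < length zs" for i using assms(1) that by (simp add: alt_cycle_def)
  have e2: "cyc_edge zs i \<in> edges G \<and> col G (cyc_edge zs i) = col H (cyc_edge zs i)" if "i < length zs" for i
    using e[OF that] assms(3) by blast
  have m: "(i + 1) mod length zs < length zs" for i using L by simp
  have a: "length zs \<ge> 3" "distinct zs"
    "\<forall>i<length zs. col H (cyc_edge zs i) \<noteq> col H (cyc_edge zs ((i + 1) mod length zs))"
    using assms(1) unfolding alt_cycle_def by auto
  show ?thesis unfolding alt_cycle_def
  proof (intro conjI allI impI)
    fix i assume i: "i < length zs"
    show "cyc_edge zs i \<in> edges G" using e2[OF i] by blast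
    have "col G (cyc_edge zs i) = col H (cyc_edge zs i)"
      "col G (cyc_edge zs ((i + 1) mod length zs)) = col H (cyc_edge zs ((i + 1) mod length zs))"
      using e2[OF i] e2[OF m[of i]] by blast+
    then show "col G (cyc_edge zs i) \<noteq> col G (cyc_edge zs ((i + 1) mod length zs))"
      using a(3) i by simp
  qed (use a assms(2) in auto)
qed

lemma nbr_shift: "nbr zs Z \<Longrightarrow> nbr zs (\<lambda>i. Z (i + c))"
  unfolding nbr_def
proof
  fix i assume H: "\<forall>i. \<exists>k<length zs. zs ! k = Z i \<and> {Z (i + 1), Z (i - 1)} =
     {zs ! ((k + 1) mod length zs), zs ! ((k + length zs - 1) mod length zs)}"
  have e: "i + 1 + c = i + c + 1" "i - 1 + c = i + c - 1" by simp_all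
  show "\<exists>k<length zs. zs ! k = Z (i + c) \<and> {Z (i + 1 + c), Z (i - 1 + c)} =
     {zs ! ((k + 1) mod length zs), zs ! ((k + length zs - 1) mod length zs)}"
    unfolding e using H by blast
qed

lemma nbr_neg: "nbr zs Z \<Longrightarrow> nbr zs (\<lambda>i. Z (- (i + c)))"
  unfolding nbr_def
proof
  fix i assume H: "\<forall>i. \<exists>k<length zs. zs ! k = Z i \<and> {Z (i + 1), Z (i - 1)} =
     {zs ! ((k + 1) mod length zs), zs ! ((k + length zs - 1) mod length zs)}"
  have e: "- (i + 1 + c) = - (i + c) - 1" "- (i - 1 + c) = - (i + c) + 1" by simp_all
  obtain k where k: "k<length zs" "zs ! k = Z (- (i + c))" "{Z (- (i + c) + 1), Z (- (i + c) - 1)} =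
     {zs ! ((k + 1) mod length zs), zs ! ((k + length zs - 1) mod length zs)}" using H by blast
  show "\<exists>k<length zs. zs ! k = Z (- (i + c)) \<and> {Z (- (i + 1 + c)), Z (- (i - 1 + c))} =
     {zs ! ((k + 1) mod length zs), zs ! ((k + length zs - 1) mod length zs)}"
    unfolding e using k by (intro exI[of _ k]) (simp add: insert_commute)
qed

lemma nbr_in: "nbr zs Z \<Longrightarrow> Z i \<in> set zs"
  unfolding nbr_def by (metis nth_mem)

lemma ngp_from:
  assumes ngp: "\<not> has_good_pair G xs ys" and nx: "nbr xs X" and ny: "nbr ys Y"
    and cx: "calt G X LX" and cy: "calt G Y LY" and cr: "\<And>i j. {X i, Y j} \<in> edges G"
    and o: "odd (i + j)" and c: "col G {X i, Y j} = Fc i"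
  shows "col G {X (i+1), Y (j - 1)} = Fc (i+1)"
proof -
  obtain k where k: "k < length xs" "xs ! k = X i" and
    kk: "{X (i + 1), X (i - 1)} = {xs ! ((k + 1) mod length xs), xs ! ((k + length xs - 1) mod length xs)}"
    using nx unfolding nbr_def by blast
  obtain l where l: "l < length ys" "ys ! l = Y j" and
    ll: "{Y (j + 1), Y (j - 1)} = {ys ! ((l + 1) mod length ys), ys ! ((l + length ys - 1) mod length ys)}"
    using ny unfolding nbr_def by blast
  have c1: "col G {X i, X (i+1)} = Fc i" using cx by (simp add: calt_def)
  have c2: "col G {Y (j - 1), Y (j - 1 + 1)} = Fc (j - 1)" using cy unfolding calt_def by blast
  then have c2': "col G {Y j, Y (j - 1)} = Fc i" using o by (auto simp: insert_commute Fc_def)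
  have n1: "cyc_nbr G xs (X i) (Fc i) (X (i+1))"
    unfolding cyc_nbr_def using k kk c1 by (intro exI[of _ k]) (auto simp: doubleton_eq_iff)
  have n2: "cyc_nbr G ys (Y j) (Fc i) (Y (j - 1))"
    unfolding cyc_nbr_def using l ll c2' by (intro exI[of _ l]) (auto simp: doubleton_eq_iff)
  have "X i \<in> set xs" "Y j \<in> set ys" using nbr_in[OF nx] nbr_in[OF ny] by auto
  then have "col G {X (i+1), Y (j - 1)} \<noteq> Fc i"
    using ngp n1 n2 c cr[of "i+1" "j - 1"] unfolding has_good_pair_def by blast
  then show ?thesis by (rule col_two) simp
qed


lemma range_shift: "range (\<lambda>i. Z (i + c)) = range (Z :: int \<Rightarrow> 'a)"
proof
  show "range Z \<subseteq> range (\<lambda>i. Z (i + c))"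
  proof
    fix x assume "x \<in> range Z"
    then obtain t where "x = Z t" by auto
    then have "x = Z ((t - c) + c)" by simp
    then show "x \<in> range (\<lambda>i. Z (i + c))" by blast
  qed
qed auto

lemma range_neg: "range (\<lambda>i. Z (- (i + c))) = range (Z :: int \<Rightarrow> 'a)"
proof
  show "range Z \<subseteq> range (\<lambda>i. Z (- (i + c)))"
  proof
    fix x assume "x \<in> range Z"
    then obtain t where "x = Z t" by auto
    then have "x = Z (- ((- t - c) + c))" by simp
    then show "x \<in> range (\<lambda>i. Z (- (i + c)))" by blast
  qed
qed auto

lemma pancyc_core:
  assumes c: "core G X Y LX LY n m" and v: "verts G = range X \<union> range Y"
    and card: "int (card (verts G)) = 2*n + 2*m"
  shows "vertex_alt_pancyclic G"
proof -
  interpret core G X Y LX LY n m by (rule c)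
  have nm: "n + m \<ge> 0" using n2 m2 by simp
  show ?thesis unfolding vertex_alt_pancyclic_def
  proof (intro exI[of _ "nat (n + m)"] conjI ballI allI impI)
    show "card (verts G) = 2 * nat (n + m)" using card nm by linarith
    fix w k assume w: "w \<in> verts G" and k: "2 \<le> k \<and> k \<le> nat (n + m)"
    have wr: "w \<in> range X \<union> range Y" using w v by simp
    show "\<exists>vs. alt_cycle G vs \<and> length vs = 2 * k \<and> w \<in> set vs"
    proof (cases "int k \<le> n + m - 1")
      case True
      then obtain vs where "alt_cycle G vs" "int (length vs) = 2 * int k" "w \<in> set vs"
        using cyc_small[of "int k" w] k wr by auto
      then show ?thesis by (intro exI[of _ vs]) simp
    next
      case False
      then have "int k = n + m" using k nm by linarith
      then obtain vs where "alt_cycle G vs" "int (length vs) = 2 * int k" "w \<in> set vs"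
        using cyc_ham[of w] wr by auto
      then show ?thesis by (intro exI[of _ vs]) simp
    qed
  qed
qed


theorem theorem3p13:
  fixes G1 G2 G :: "'a cgraph" and xs ys :: "'a list"
  assumes "cgraph G1" and "cgraph G2"
    and "ham_alt_cycle G1 xs" and "ham_alt_cycle G2 ys"
    and "in_gsum G G1 G2"
    and "\<not> has_good_pair G xs ys"
    and "\<exists>v\<in>set xs. non_singular G v ys"
    and "\<exists>w\<in>set ys. non_singular G w xs"
  shows "vertex_alt_pancyclic G"
proof -
  have dj: "verts G1 \<inter> verts G2 = {}" and vG: "verts G = verts G1 \<union> verts G2"
    and e1: "{e \<in> edges G. e \<subseteq> verts G1} = edges G1" and e2: "{e \<in> edges G. e \<subseteq> verts G2} = edges G2"
    and c1: "\<forall>e\<in>edges G1. col G e = col G1 e" and c2: "\<forall>e\<in>edges G2. col G e = col G2 e"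
    and cr: "\<forall>u\<in>verts G1. \<forall>w\<in>verts G2. {u, w} \<in> edges G"
    using assms(5) unfolding in_gsum_def by blast+
  have hx: "alt_cycle G1 xs" "set xs = verts G1" using assms(3) unfolding ham_alt_cycle_def by auto
  have hy: "alt_cycle G2 ys" "set ys = verts G2" using assms(4) unfolding ham_alt_cycle_def by auto
  have ax: "alt_cycle G xs"
    by (rule transfer_alt[OF hx(1)]) (use hx(2) vG e1 c1 in auto)
  have ay: "alt_cycle G ys"
    by (rule transfer_alt[OF hy(1)]) (use hy(2) vG e2 c2 in auto)
  define Lx where "Lx = int (length xs)"
  define Ly where "Ly = int (length ys)"
  have rx: "rc G (Z0 xs) Lx" "nbr xs (Z0 xs)" using Z0_rc[OF ax] unfolding Lx_def by auto
  have ry: "rc G (Z0 ys) Ly" "nbr ys (Z0 ys)" using Z0_rc[OF ay] unfolding Ly_def by auto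
  obtain ox where cx: "calt G (\<lambda>i. Z0 xs (i + ox)) Lx" using rc_norm[OF rx(1)] by blast
  obtain oy where cyp: "calt G (\<lambda>i. Z0 ys (i + oy)) Ly" using rc_norm[OF ry(1)] by blast
  obtain oy' where cym: "calt G (\<lambda>i. Z0 ys (- (i + oy'))) Ly" using rc_norm[OF rc_neg[OF ry(1)]] by blast
  define X where "X = (\<lambda>i. Z0 xs (i + ox))"
  define Yp where "Yp = (\<lambda>i. Z0 ys (i + oy))"
  define Ym where "Ym = (\<lambda>i. Z0 ys (- (i + oy')))"
  have nX: "nbr xs X" unfolding X_def by (rule nbr_shift[OF rx(2)])
  have nYp: "nbr ys Yp" unfolding Yp_def by (rule nbr_shift[OF ry(2)])
  have nYm: "nbr ys Ym" unfolding Ym_def by (rule nbr_neg[OF ry(2)])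
  have xsne: "xs \<noteq> []" and ysne: "ys \<noteq> []" using ax ay by (auto simp: alt_cycle_def)
  have rX: "range X = set xs" unfolding X_def range_shift using Z0_range[OF xsne] .
  have rYp: "range Yp = set ys" unfolding Yp_def range_shift using Z0_range[OF ysne] .
  have rYm: "range Ym = set ys" unfolding Ym_def range_neg using Z0_range[OF ysne] .
  have cX: "calt G X Lx" using cx unfolding X_def .
  have cYp: "calt G Yp Ly" using cyp unfolding Yp_def .
  have cYm: "calt G Ym Ly" using cym unfolding Ym_def .
  have Lx3: "Lx \<ge> 3" "Ly \<ge> 3" using ax ay unfolding Lx_def Ly_def alt_cycle_def by auto
  define n where "n = Lx div 2"
  define m where "m = Ly div 2"
  have Lxn: "Lx = 2*n" using calt_even[OF cX] unfolding n_def by simp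
  have Lym: "Ly = 2*m" using calt_even[OF cYp] unfolding m_def by simp
  have n2: "n \<ge> 2" using Lxn Lx3 by simp
  have m2: "m \<ge> 2" using Lym Lx3 by simp
  have Xin: "X i \<in> verts G1" for i using rX hx(2) by blast
  have Ypin: "Yp j \<in> verts G2" for j using rYp hy(2) by blast
  have Ymin: "Ym j \<in> verts G2" for j using rYm hy(2) by blast
  have core0_of: "core0 G X Y Lx Ly n m" if cY: "calt G Y Ly" and nY: "nbr ys Y" and Yin: "\<And>j. Y j \<in> verts G2" for Y
  proof (intro core0.intro twocyc.intro core0_axioms.intro)
    show "calt G X Lx" by (rule cX)
    show "calt G Y Ly" by (rule cY)
    show "X i \<noteq> Y j" for i j
    proof
      assume "X i = Y j" then show False using Xin[of i] Yin[of j] dj by auto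
    qed
    have cr': "{X i, Y j} \<in> edges G" for i j using Xin[of i] Yin[of j] cr by blast
    then show "{X i, Y j} \<in> edges G" for i j .
    show "X i \<in> verts G" for i using Xin vG by blast
    show "Y j \<in> verts G" for j using Yin vG by blast
    show "Lx = 2*n" by (rule Lxn)
    show "Ly = 2*m" by (rule Lym)
    show "n \<ge> 2" by (rule n2)
    show "m \<ge> 2" by (rule m2)
    show "col G {X (i+1), Y (j - 1)} = Fc (i+1)" if "odd (i+j)" "col G {X i, Y j} = Fc i" for i j
      by (rule ngp_from[OF assms(6) nX nY cX cY cr' that])
  qed
  have P0: "core0 G X Yp Lx Ly n m" by (rule core0_of[OF cYp nYp Ypin])
  have M0: "core0 G X Ym Lx Ly n m" by (rule core0_of[OF cYm nYm Ymin])
  have card: "int (card (verts G)) = 2*n + 2*m"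
  proof -
    have "card (verts G) = card (set xs \<union> set ys)" using vG hx(2) hy(2) by simp
    also have "\<dots> = card (set xs) + card (set ys)"
      by (rule card_Un_disjoint) (use dj[folded hx(2) hy(2)] in auto)
    also have "\<dots> = length xs + length ys" using ax ay by (simp add: alt_cycle_def distinct_card)
    finally show ?thesis using Lxn Lym unfolding Lx_def Ly_def by simp
  qed
  have vG': "verts G = range X \<union> range Yp" "verts G = range X \<union> range Ym"
    using vG rX rYp rYm hx(2) hy(2) by auto
  show ?thesis
  proof (cases "\<exists>s1 s2. odd s1 \<and> odd s2 \<and> col G {X s1, Yp 0} = Fc s1 \<and> col G {X s2, Yp 0} \<noteq> Fc s2")
    case True
    have "core G X Yp Lx Ly n m" using P0 True by (simp add: core_def core_axioms_def)
    then show ?thesis using pancyc_core vG'(1) card by blast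
  next
    case FP: False
    show ?thesis
    proof (cases "\<exists>s1 s2. odd s1 \<and> odd s2 \<and> col G {X s1, Ym 0} = Fc s1 \<and> col G {X s2, Ym 0} \<noteq> Fc s2")
      case True
      have "core G X Ym Lx Ly n m" using M0 True by (simp add: core_def core_axioms_def)
      then show ?thesis using pancyc_core vG'(2) card by blast
    next
      case FM: False
      interpret P: core0 G X Yp Lx Ly n m by (rule P0)
      interpret M: core0 G X Ym Lx Ly n m by (rule M0)
      define r where "r = - oy - oy'"
      have YpYm: "Yp j = Ym (r - j)" for j unfolding Yp_def Ym_def r_def by simp
      have "col G {Ym 0, Ym (0 + 1)} = Fc 0" using cYm unfolding calt_def by blast
      moreover have "col G {Yp (r - 1), Yp (r - 1 + 1)} = Fc (r - 1)" using cYp unfolding calt_def by blast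
      moreover have "Yp (r - 1) = Ym 1" "Yp (r - 1 + 1) = Ym 0" using YpYm by simp_all
      ultimately have "Fc (r - 1) = Fc 0" by (simp add: insert_commute)
      then have ro: "odd r" by (simp add: Fc_def split: if_splits)
      have o1: "odd (1::int)" by simp
      have PW: "P.W s = P.W 1" if "odd s" for s unfolding P.W_def P.tX_def using FP that o1 by blast
      have MW: "M.W s = M.W 1" if "odd s" for s unfolding M.W_def M.tX_def using FM that o1 by blast
      define f where "f i j = col G {X i, Yp j}" for i j
      have H: "(f i j = Fc i) \<longleftrightarrow> (if odd (i+j) then P.W 1 else M.W 1)" for i j
      proof (cases "odd (i + j)")
        case True
        then show ?thesis using P.tX_W[OF True] PW[OF True] unfolding f_def P.tX_def by simp
      next
        case False
        then have o: "odd (i + (r - j))" using ro by simp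
        have "f i j = col G {X i, Ym (r - j)}" unfolding f_def YpYm ..
        then show ?thesis using M.tX_W[OF o] MW[OF o] False unfolding M.tX_def by simp
      qed
      obtain v j1 j2 where v: "v \<in> set xs" "col G {v, Yp j1} \<noteq> col G {v, Yp j2}"
        using assms(7) rYp unfolding non_singular_def by (metis imageE)
      obtain i where vi: "v = X i" using v(1) rX by auto
      obtain w i1 i2 where w: "w \<in> set ys" "col G {w, X i1} \<noteq> col G {w, X i2}"
        using assms(8) rX unfolding non_singular_def by (metis imageE)
      obtain j where wj: "w = Yp j" using w(1) rYp by auto
      have S1: "f i j1 \<noteq> f i j2" using v vi unfolding f_def by simp
      have S2: "f i1 j \<noteq> f i2 j" using w wj unfolding f_def by (simp add: insert_commute)
      show ?thesis using sing_contra[OF H S1 S2] by blast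
    qed
  qed
qed

end
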